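(* Let $A,B \in\mathbb{R}^{m\times n}$ and $b\in\mathbb{R}^m$ with $\operatorname{rank}(B) = m$ and $m<n$. If $B^\dagger b < 0$ and $\|B^\dagger A\|_\infty < \gamma/2$, where $\gamma = \dfrac{\min_i|(B^\dagger b)_i|}{\max_i|(B^\dagger b)_i|}$, then for every sign pattern $s\in\{1,-1\}^n$ the equation $Ax-B|x|=b$ has infinitely many solutions with sign pattern $s$.
   Context: $B^\dagger$ is the Moore–Penrose inverse; $|x|$ is the entrywise absolute value; vector inequalities are entrywise; $\|\cdot\|_\infty$ on matrices is the operator norm induced by the vector $\infty$-norm. A vector $x$ has sign pattern $s$ if $\operatorname{sign}(x_{(i)})=s_{(i)}$ for all $i$. *)

theory Defs
  imports "HOL-Analysis.Analysis"
begin

definition is_moore_penrose :: "real^'m^'n \<Rightarrow> real^'n^'m \<Rightarrow> bool" where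
  "is_moore_penrose X B \<longleftrightarrow>
     B ** X ** B = B \<and> X ** B ** X = X \<and>
     transpose (B ** X) = B ** X \<and> transpose (X ** B) = X ** B"

definition pinv :: "real^'n^'m \<Rightarrow> real^'m^'n" where
  "pinv B = (THE X. is_moore_penrose X B)"

definition vec_inf_norm :: "real^'n \<Rightarrow> real" where
  "vec_inf_norm x = Max (range (\<lambda>i. \<bar>x $ i\<bar>))"

definition mat_inf_norm :: "real^'n^'m \<Rightarrow> real" where
  "mat_inf_norm M = Sup {vec_inf_norm (M *v x) | x. vec_inf_norm x \<le> 1}"

definition vec_abs :: "real^'n \<Rightarrow> real^'n" where
  "vec_abs x = (\<chi> i. \<bar>x $ i\<bar>)"

end

theory Submission
  imports Defs
begin

lemma vinf_ge: "\<bar>x $ i\<bar> \<le> vec_inf_norm x"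
  unfolding vec_inf_norm_def by (rule Max_ge) auto

lemma vinf_le: "(\<And>i. \<bar>x $ i\<bar> \<le> c) \<Longrightarrow> vec_inf_norm x \<le> c"
  unfolding vec_inf_norm_def by (subst Max_le_iff) auto

lemma vinf_nonneg: "0 \<le> vec_inf_norm x"
  using vinf_ge[of x] abs_ge_zero order_trans by blast

lemma vinf_zero: "vec_inf_norm x = 0 \<Longrightarrow> x = 0"
  using vinf_ge[of x] by (metis abs_le_zero_iff vec_eq_iff zero_index)

lemma vinf_scale: "vec_inf_norm (t *\<^sub>R x) = \<bar>t\<bar> * vec_inf_norm x"
proof (rule antisym)
  show "vec_inf_norm (t *\<^sub>R x) \<le> \<bar>t\<bar> * vec_inf_norm x"
    by (rule vinf_le) (simp add: abs_mult mult_left_mono vinf_ge)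
  obtain i where "vec_inf_norm x = \<bar>x $ i\<bar>"
  proof -
    have "Max (range (\<lambda>i. \<bar>x $ i\<bar>)) \<in> range (\<lambda>i. \<bar>x $ i\<bar>)"
      by (rule Max_in) auto
    then show ?thesis using that unfolding vec_inf_norm_def by blast
  qed
  then show "\<bar>t\<bar> * vec_inf_norm x \<le> vec_inf_norm (t *\<^sub>R x)"
    using vinf_ge[of "t *\<^sub>R x" i] by (simp add: abs_mult)
qed

lemma mat_bdd: "bdd_above {vec_inf_norm (M *v x) | x. vec_inf_norm x \<le> 1}"
proof (rule bdd_aboveI)
  fix r assume "r \<in> {vec_inf_norm (M *v x) | x. vec_inf_norm x \<le> 1}"
  then obtain x where r: "r = vec_inf_norm (M *v x)" and x: "vec_inf_norm x \<le> 1" by auto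
  have "\<bar>(M *v x) $ i\<bar> \<le> (\<Sum>k\<in>UNIV. \<Sum>j\<in>UNIV. \<bar>M $ k $ j\<bar>)" for i
  proof -
    have "\<bar>(M *v x) $ i\<bar> \<le> (\<Sum>j\<in>UNIV. \<bar>M $ i $ j * x $ j\<bar>)"
      unfolding matrix_vector_mult_def by (simp add: sum_abs)
    also have "\<dots> \<le> (\<Sum>j\<in>UNIV. \<bar>M $ i $ j\<bar>)"
    proof (rule sum_mono)
      fix j
      have "\<bar>x $ j\<bar> \<le> 1" using vinf_ge[of x j] x by linarith
      then show "\<bar>M $ i $ j * x $ j\<bar> \<le> \<bar>M $ i $ j\<bar>"
        by (simp add: abs_mult mult_left_le)
    qed
    also have "\<dots> \<le> (\<Sum>k\<in>UNIV. \<Sum>j\<in>UNIV. \<bar>M $ k $ j\<bar>)"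
      by (rule member_le_sum) (auto intro: sum_nonneg)
    finally show ?thesis .
  qed
  then show "r \<le> (\<Sum>k\<in>UNIV. \<Sum>j\<in>UNIV. \<bar>M $ k $ j\<bar>)" unfolding r by (rule vinf_le)
qed

lemma mat_nonneg: "0 \<le> mat_inf_norm M"
  unfolding mat_inf_norm_def
proof (rule cSup_upper2[of "vec_inf_norm (M *v 0)"])
  show "vec_inf_norm (M *v 0) \<in> {vec_inf_norm (M *v x) |x. vec_inf_norm x \<le> 1}"
    by (auto intro!: exI[of _ 0] vinf_le)
qed (auto simp: vinf_nonneg mat_bdd)

lemma op_bound: "\<bar>(M *v v) $ i\<bar> \<le> mat_inf_norm M * vec_inf_norm v"
proof (cases "vec_inf_norm v = 0")
  case True then have "v = 0" by (rule vinf_zero)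
  then show ?thesis using True by simp
next
  case False
  define r where "r = vec_inf_norm v"
  have r: "r > 0" using False vinf_nonneg r_def by (metis less_eq_real_def)
  define x where "x = (1/r) *\<^sub>R v"
  have "vec_inf_norm x \<le> 1" using r by (simp add: x_def vinf_scale r_def)
  then have "vec_inf_norm (M *v x) \<le> mat_inf_norm M"
    unfolding mat_inf_norm_def by (intro cSup_upper[OF _ mat_bdd]) auto
  moreover have "M *v x = (1/r) *\<^sub>R (M *v v)" by (simp add: x_def algebra_simps)
  ultimately have "(1/r) * \<bar>(M *v v) $ i\<bar> \<le> mat_inf_norm M"
    using vinf_ge[of "M *v x" i] r by (simp add: abs_mult)
  then show ?thesis using r unfolding r_def[symmetric] by (simp add: field_simps)
qed

lemma mp_unique:
  fixes B :: "real^'n^'m"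
  assumes X: "is_moore_penrose X B" and Y: "is_moore_penrose Y B"
  shows "X = Y"
proof -
  have X1: "B ** X ** B = B" and X2: "X ** B ** X = X" and X3: "transpose (B ** X) = B ** X"
    and X4: "transpose (X ** B) = X ** B" using X by (auto simp: is_moore_penrose_def)
  have Y1: "B ** Y ** B = B" and Y2: "Y ** B ** Y = Y" and Y3: "transpose (B ** Y) = B ** Y"
    and Y4: "transpose (Y ** B) = Y ** B" using Y by (auto simp: is_moore_penrose_def)
  have "X = X ** (B ** X)" using X2 by (simp add: matrix_mul_assoc)
  also have "\<dots> = X ** transpose (B ** X)" using X3 by simp
  also have "\<dots> = X ** (transpose X ** transpose (B ** Y ** B))"
    using Y1 by (simp add: matrix_transpose_mul)
  also have "\<dots> = X ** (transpose (B ** X) ** transpose (B ** Y))"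
    by (simp add: matrix_transpose_mul matrix_mul_assoc)
  also have "\<dots> = X ** (B ** X) ** (B ** Y)" using X3 Y3 by (simp add: matrix_mul_assoc)
  also have "\<dots> = (X ** B ** X) ** B ** Y" by (simp only: matrix_mul_assoc)
  also have "\<dots> = X ** B ** Y" by (simp only: X2)
  finally have eX: "X = X ** B ** Y" .
  have "Y = (Y ** B) ** Y" using Y2 by (simp add: matrix_mul_assoc)
  also have "\<dots> = transpose (Y ** B) ** Y" using Y4 by simp
  also have "\<dots> = (transpose (B ** X ** B) ** transpose Y) ** Y"
    using X1 by (simp add: matrix_transpose_mul)
  also have "\<dots> = (transpose (X ** B) ** transpose (Y ** B)) ** Y"
    by (simp add: matrix_transpose_mul matrix_mul_assoc)
  also have "\<dots> = X ** B ** (Y ** B ** Y)" using X4 Y4 by (simp add: matrix_mul_assoc)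
  also have "\<dots> = X ** B ** Y" using Y2 by simp
  finally show ?thesis using eX by simp
qed

lemma mp_exists:
  fixes B :: "real^'n^'m"
  assumes "rank B = CARD('m)"
  shows "\<exists>X. is_moore_penrose X B"
proof -
  define K where "K = B ** transpose B"
  have injT: "inj ((*v) (transpose B))"
    using assms full_rank_injective[of "transpose B"] rank_transpose[of B] by simp
  have "inj ((*v) K)"
  proof (rule injI)
    fix u v assume "K *v u = K *v v"
    then have "K *v (u - v) = 0" by (simp add: matrix_vector_mult_diff_distrib)
    then have "inner (u - v) (K *v (u - v)) = 0" by simp
    moreover have "inner (u - v) (K *v (u - v)) = inner ((u - v) v* B) ((u - v) v* B)"
      unfolding K_def matrix_vector_mul_assoc[symmetric]
      using dot_lmul_matrix[of "u-v" B "(u - v) v* B"] by (simp add: inner_commute)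
    ultimately have "inner (transpose B *v (u - v)) (transpose B *v (u - v)) = 0"
      by simp
    then have "transpose B *v (u - v) = transpose B *v 0" by (simp del: transpose_matrix_vector)
    then have "u - v = 0" using injT by (meson injD)
    then show "u = v" by simp
  qed
  then obtain G where GK: "G ** K = mat 1" using matrix_left_invertible_injective by blast
  then have KG: "K ** G = mat 1" using matrix_left_right_inverse by blast
  have Ksym: "transpose K = K" by (simp add: K_def matrix_transpose_mul)
  have "transpose G ** K = transpose (K ** G)" using Ksym by (simp add: matrix_transpose_mul)
  then have "transpose G ** K = mat 1" using KG by simp
  then have "transpose G = transpose G ** (K ** G)" using KG by simp
  also have "\<dots> = G" using \<open>transpose G ** K = mat 1\<close> by (simp add: matrix_mul_assoc)
  finally have Gsym: "transpose G = G" .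
  define X where "X = transpose B ** G"
  have BX: "B ** X = mat 1" using KG by (simp add: X_def K_def matrix_mul_assoc)
  have "is_moore_penrose X B"
    unfolding is_moore_penrose_def
  proof (intro conjI)
    show "B ** X ** B = B" using BX by simp
    show "X ** B ** X = X" using BX by (simp add: matrix_mul_assoc[symmetric])
    show "transpose (B ** X) = B ** X" using BX by simp
    show "transpose (X ** B) = X ** B"
      by (simp add: X_def matrix_transpose_mul Gsym matrix_mul_assoc)
  qed
  then show ?thesis by blast
qed

lemma pinv_right:
  fixes B :: "real^'n^'m"
  assumes r: "rank B = CARD('m)"
  shows "B ** pinv B = mat 1"
proof -
  have "\<exists>!X. is_moore_penrose X B" using mp_exists[OF r] mp_unique by blast
  then have P: "is_moore_penrose (pinv B) B" unfolding pinv_def by (rule theI')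
  then have BPB: "B ** pinv B ** B = B" by (simp add: is_moore_penrose_def)
  have surj: "surj ((*v) B)" using r full_rank_surjective by blast
  show ?thesis
  proof (rule matrix_eq[THEN iffD2], intro allI)
    fix y
    obtain z where z: "y = B *v z" using surj by (metis surjD)
    have "(B ** pinv B) *v y = (B ** pinv B ** B) *v z" by (simp add: z matrix_vector_mul_assoc)
    then show "(B ** pinv B) *v y = mat 1 *v y" using BPB z by simp
  qed
qed


lemma diag_apply: "((\<chi> i j. if i = j then s $ i else 0) *v y) $ i = s $ i * (y $ i :: real)"
proof -
  have "(\<Sum>j\<in>UNIV. (if i = j then s $ i else 0) * y $ j) = (\<Sum>j\<in>UNIV. if i = j then s $ i * y $ j else 0)"
    by (rule sum.cong) auto
  then show ?thesis by (simp add: matrix_vector_mult_def)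
qed

theorem corollary3p3:
  fixes A B :: "real^'n^'m" and b :: "real^'m" and \<gamma> :: real
  assumes rankB: "rank B = CARD('m)"
    and mn: "CARD('m) < CARD('n)"
    and neg: "\<forall>i. (pinv B *v b) $ i < 0"
    and gamma: "\<gamma> = Min (range (\<lambda>i. \<bar>(pinv B *v b) $ i\<bar>)) / Max (range (\<lambda>i. \<bar>(pinv B *v b) $ i\<bar>))"
    and small: "mat_inf_norm (pinv B ** A) < \<gamma> / 2"
  shows "\<forall>s :: real^'n. (\<forall>i. s $ i \<in> {1, -1}) \<longrightarrow>
           infinite {x :: real^'n. A *v x - B *v vec_abs x = b \<and> (\<forall>i. sgn (x $ i) = s $ i)}"
proof (intro allI impI)
  fix s :: "real^'n"
  assume s: "\<forall>i. s $ i \<in> {1, -1}"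
  have sabs: "\<bar>s $ i\<bar> = 1" for i using s[rule_format, of i] by auto
  have ss: "s $ i * s $ i = 1" for i using s[rule_format, of i] by auto
  define P where "P = pinv B"
  have PB: "B ** P = mat 1" unfolding P_def by (rule pinv_right[OF rankB])
  define p where "p = P *v b"
  define N where "N = P ** A"
  define c where "c = mat_inf_norm N"
  define mi where "mi = Min (range (\<lambda>i. \<bar>p $ i\<bar>))"
  define mx where "mx = Max (range (\<lambda>i. \<bar>p $ i\<bar>))"
  have pneg: "p $ i < 0" for i using neg by (simp add: p_def P_def)
  have mi_le: "mi \<le> \<bar>p $ i\<bar>" for i unfolding mi_def by (rule Min_le) auto
  have mx_ge: "\<bar>p $ i\<bar> \<le> mx" for i unfolding mx_def by (rule Max_ge) auto
  have "Min (range (\<lambda>i. \<bar>p $ i\<bar>)) \<in> range (\<lambda>i. \<bar>p $ i\<bar>)" by (rule Min_in) auto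
  then obtain i0 where i0: "mi = \<bar>p $ i0\<bar>" unfolding mi_def by blast
  have mi_pos: "mi > 0" using i0 pneg[of i0] by simp
  have mimx: "mi \<le> mx" using mi_le[of i0] mx_ge[of i0] i0 by simp
  have mx_pos: "mx > 0" using mi_pos mimx by simp
  have c_nonneg: "c \<ge> 0" unfolding c_def by (rule mat_nonneg)
  have "c < mi / mx / 2" using small gamma by (simp add: c_def N_def mi_def mx_def p_def P_def)
  then have c2: "2 * c * mx < mi" using mx_pos by (simp add: field_simps)
  have "c * mi \<le> c * mx" using c_nonneg mimx by (simp add: mult_left_mono)
  define \<delta> where "\<delta> = (1 - c) * mi - c * mx"
  have delta_pos: "\<delta> > 0" unfolding \<delta>_def using c2 \<open>c * mi \<le> c * mx\<close> by (simp add: algebra_simps)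
  have c1: "c < 1"
  proof (rule ccontr)
    assume "\<not> c < 1"
    then have "1 * mx \<le> c * mx" using mx_pos by (intro mult_right_mono) auto
    moreover have "2 * c * mx = 2 * (c * mx)" by simp
    ultimately show False using c2 mimx mx_pos by linarith
  qed
  obtain h0 where h0: "h0 \<noteq> 0" "B *v h0 = 0"
    using matrix_nonfull_linear_equations_eq[of B] rankB mn by auto
  define nh where "nh = vec_inf_norm h0"
  have nh_pos: "nh > 0" using h0(1) vinf_zero vinf_nonneg nh_def by (metis less_eq_real_def)
  define Dm :: "real^'n^'n" where "Dm = (\<chi> i j. if i = j then s $ i else 0)"
  have Dm_apply: "(Dm *v y) $ i = s $ i * y $ i" for y i unfolding Dm_def by (rule diag_apply)
  have Dm_norm: "vec_inf_norm (Dm *v y) = vec_inf_norm y" for y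
  proof (rule antisym)
    show "vec_inf_norm (Dm *v y) \<le> vec_inf_norm y"
      by (rule vinf_le) (simp add: Dm_apply abs_mult sabs vinf_ge)
    show "vec_inf_norm y \<le> vec_inf_norm (Dm *v y)"
      by (rule vinf_le) (metis Dm_apply abs_mult sabs mult_1 vinf_ge)
  qed
  define M where "M = mat 1 - N ** Dm"
  have Mapp: "M *v y = y - N *v (Dm *v y)" for y
    by (simp add: M_def matrix_vector_mult_diff_rdistrib matrix_vector_mul_assoc)
  have "inj ((*v) M)"
  proof (rule injI)
    fix u v assume "M *v u = M *v v"
    then have "M *v (u - v) = 0" by (simp add: matrix_vector_mult_diff_distrib)
    then have w: "u - v = N *v (Dm *v (u - v))" using Mapp by simp
    define w where "w = u - v"
    have "\<bar>w $ i\<bar> \<le> c * vec_inf_norm w" for i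
      using op_bound[of N "Dm *v w" i] w unfolding w_def c_def Dm_norm by simp
    then have "vec_inf_norm w \<le> c * vec_inf_norm w" by (rule vinf_le)
    then have "vec_inf_norm w = 0" using c1 vinf_nonneg[of w]
      by (metis le_less mult_less_cancel_right2 not_le)
    then have "w = 0" by (rule vinf_zero)
    then show "u = v" using w_def by simp
  qed
  then obtain G where "G ** M = mat 1" using matrix_left_invertible_injective by blast
  then have MG: "M ** G = mat 1" using matrix_left_right_inverse by blast
  define Y where "Y t = G *v (t *\<^sub>R h0 - p)" for t
  have MY: "M *v Y t = t *\<^sub>R h0 - p" for t
    by (simp add: Y_def matrix_vector_mul_assoc MG)
  define X where "X t = Dm *v Y t" for t
  have Ypos: "Y t $ i > 0" if t: "0 < t" "t * nh < \<delta>" for t i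
  proof -
    define y where "y = Y t"
    define ny where "ny = vec_inf_norm y"
    have yeq: "y $ j = (N *v (Dm *v y)) $ j + t * h0 $ j - p $ j" for j
    proof -
      have "y - N *v (Dm *v y) = t *\<^sub>R h0 - p" using MY[of t] Mapp[of y] y_def by simp
      then have "y = N *v (Dm *v y) + (t *\<^sub>R h0 - p)" by (simp add: algebra_simps)
      then have "y $ j = (N *v (Dm *v y) + (t *\<^sub>R h0 - p)) $ j" by (rule arg_cong)
      then show ?thesis by simp
    qed
    have nb: "\<bar>(N *v (Dm *v y)) $ j\<bar> \<le> c * ny" for j
      using op_bound[of N "Dm *v y" j] unfolding c_def ny_def Dm_norm .
    have hb: "\<bar>t * h0 $ j\<bar> \<le> t * nh" for j
      using vinf_ge[of h0 j] t(1) by (simp add: abs_mult nh_def)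
    have "\<bar>y $ j\<bar> \<le> c * ny + t * nh + mx" for j
      using yeq[of j] nb[of j] hb[of j] mx_ge[of j] by linarith
    then have Yb: "ny \<le> c * ny + t * nh + mx" unfolding ny_def by (rule vinf_le)
    have lb: "y $ i \<ge> mi - c * ny - t * nh"
      using yeq[of i] nb[of i] hb[of i] mi_le[of i] pneg[of i] by linarith
    have "c * ((1 - c) * ny) \<le> c * (t * nh + mx)"
      using Yb c_nonneg by (intro mult_left_mono) (auto simp: algebra_simps)
    moreover have "(1 - c) * y $ i \<ge> (1 - c) * (mi - c * ny - t * nh)"
      using lb c1 by (intro mult_left_mono) auto
    ultimately have "(1 - c) * y $ i \<ge> \<delta> - t * nh"
      unfolding \<delta>_def by (simp add: algebra_simps)
    then have "(1 - c) * y $ i > 0" using t by linarith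
    then show ?thesis using c1 y_def by (simp add: zero_less_mult_iff)
  qed
  define T where "T = {0 <..< \<delta> / nh}"
  have T_mem: "0 < t \<and> t * nh < \<delta>" if "t \<in> T" for t
    using that nh_pos by (simp add: T_def pos_less_divide_eq)
  have "X ` T \<subseteq> {x. A *v x - B *v vec_abs x = b \<and> (\<forall>i. sgn (x $ i) = s $ i)}"
  proof safe
    fix t assume tT: "t \<in> T"
    note yp = Ypos[OF T_mem[OF tT, THEN conjunct1] T_mem[OF tT, THEN conjunct2]]
    have va: "vec_abs (X t) = Y t"
      using yp by (simp add: vec_abs_def X_def Dm_apply abs_mult sabs vec_eq_iff less_imp_le)
    have "Y t - N *v X t = t *\<^sub>R h0 - p" using MY[of t] Mapp[of "Y t"] by (simp add: X_def)
    then have "Y t = N *v X t + (t *\<^sub>R h0 - p)" by (simp add: algebra_simps)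
    then have "B *v Y t = B *v (N *v X t) + t *\<^sub>R (B *v h0) - B *v p"
      by (simp add: matrix_vector_right_distrib matrix_vector_mult_diff_distrib matrix_vector_mult_scaleR)
    also have "\<dots> = A *v X t - b"
      using h0(2) PB by (simp add: N_def p_def matrix_vector_mul_assoc matrix_mul_assoc)
    finally show "A *v X t - B *v vec_abs (X t) = b" using va by simp
    fix i
    show "sgn (X t $ i) = s $ i"
      using yp[of i] s[rule_format, of i] by (auto simp: X_def Dm_apply sgn_mult)
  qed
  moreover have "inj_on X T"
  proof (rule inj_onI)
    fix t t' assume "t \<in> T" "t' \<in> T" "X t = X t'"
    have YX: "Y u $ i = s $ i * X u $ i" for u i
      using ss[of i] by (simp add: X_def Dm_apply mult.assoc[symmetric])
    have "Y t = Y t'" using \<open>X t = X t'\<close> by (simp add: vec_eq_iff YX)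
    then have "t *\<^sub>R h0 - p = t' *\<^sub>R h0 - p" using MY by metis
    then show "t = t'" using h0(1) by simp
  qed
  moreover have "infinite T" using delta_pos nh_pos by (simp add: T_def)
  ultimately have "infinite (X ` T)" by (simp add: finite_image_iff)
  then show "infinite {x. A *v x - B *v vec_abs x = b \<and> (\<forall>i. sgn (x $ i) = s $ i)}"
    using \<open>X ` T \<subseteq> _\<close> by (rule infinite_super[rotated])
qed

end
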